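(* For every forest $F$, $A(F)=\{x\in T(r_1;F): P(x)\succ\max\{\tfrac12P(r_1),P(r_2)\}\}$, where $P(x)\succ\frac12P(r_1)$ means $P(x)>\frac12P(r_1)$ or ($P(x)=\frac12P(r_1)$ and $x<r_1$), and $P(x)\succ P(r_2)$ means $P(x)>P(r_2)$ or ($P(x)=P(r_2)$ and $x<r_2$).
   Context: Let $N$ be a finite, totally ordered set of vertices. A directed forest on $N$ is a directed acyclic graph on $N$ with every out-degree at most $1$. For a forest $F$: roots are vertices with no out-edge; $T(x;F)$ is the subtree rooted at $x$ (vertices with a directed path to $x$, including $x$); $P(x)=|T(x;F)|$; $F_x$ is $F$ with the out-edge of $x$ removed (if any). Write $P(x)\succ P(y)$ iff $P(x)>P(y)$ or ($P(x)=P(y)$ and $x<y$); let $r_1,r_2,\dots$ be the roots of $F$ in decreasing $\succ$-order, and $r_1(F')$ the $\succ$-maximal root of a forest $F'$. $A(F)=\{x\in N: x=r_1(F_x)\}$. If $F$ has only one root, the condition involving $r_2$ is considered vacuous. *)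

theory Defs
  imports Complex_Main
begin

definition forest :: "'a set \<Rightarrow> ('a \<times> 'a) set \<Rightarrow> bool" where
  "forest N E \<longleftrightarrow> finite N \<and> E \<subseteq> N \<times> N \<and> acyclic E \<and>
     (\<forall>x y z. (x, y) \<in> E \<longrightarrow> (x, z) \<in> E \<longrightarrow> y = z)"

definition roots :: "'a set \<Rightarrow> ('a \<times> 'a) set \<Rightarrow> 'a set" where
  "roots N E = {x \<in> N. \<forall>y. (x, y) \<notin> E}"

definition subtree :: "'a set \<Rightarrow> ('a \<times> 'a) set \<Rightarrow> 'a \<Rightarrow> 'a set" where
  "subtree N E x = {y \<in> N. (y, x) \<in> E\<^sup>*}"

definition P :: "'a set \<Rightarrow> ('a \<times> 'a) set \<Rightarrow> 'a \<Rightarrow> nat" where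
  "P N E x = card (subtree N E x)"

definition cut :: "('a \<times> 'a) set \<Rightarrow> 'a \<Rightarrow> ('a \<times> 'a) set" where
  "cut E x = {(a, b) \<in> E. a \<noteq> x}"

definition succ :: "'a set \<Rightarrow> ('a \<times> 'a) set \<Rightarrow> 'a::linorder \<Rightarrow> 'a \<Rightarrow> bool" where
  "succ N E x y \<longleftrightarrow> P N E x > P N E y \<or> (P N E x = P N E y \<and> x < y)"

definition succ_max :: "'a set \<Rightarrow> ('a \<times> 'a) set \<Rightarrow> 'a::linorder set \<Rightarrow> 'a" where
  "succ_max N E S = (THE r. r \<in> S \<and> (\<forall>r' \<in> S. r' \<noteq> r \<longrightarrow> succ N E r r'))"

definition r1 :: "'a set \<Rightarrow> ('a \<times> 'a) set \<Rightarrow> 'a::linorder" where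
  "r1 N E = succ_max N E (roots N E)"

definition r2 :: "'a set \<Rightarrow> ('a \<times> 'a) set \<Rightarrow> 'a::linorder" where
  "r2 N E = succ_max N E (roots N E - {r1 N E})"

definition A :: "'a set \<Rightarrow> ('a \<times> 'a) set \<Rightarrow> 'a::linorder set" where
  "A N E = {x \<in> N. x = r1 N (cut E x)}"

end

theory Submission imports Defs begin

lemma rt_lin:
  assumes fn: "\<forall>x y z. (x, y) \<in> E \<longrightarrow> (x, z) \<in> E \<longrightarrow> y = z"
  and "(x, a) \<in> E\<^sup>*" and "(x, b) \<in> E\<^sup>*"
  shows "(a, b) \<in> E\<^sup>* \<or> (b, a) \<in> E\<^sup>*"
  using assms(2,3)
proof (induction rule: rtrancl_induct)
  case base then show ?case by simp
next
  case (step y z)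
  from step.IH step.prems have "(y, b) \<in> E\<^sup>* \<or> (b, y) \<in> E\<^sup>*" by simp
  then show ?case
  proof
    assume "(b, y) \<in> E\<^sup>*" then show ?thesis using step.hyps(2) by (meson rtrancl.rtrancl_into_rtrancl)
  next
    assume "(y, b) \<in> E\<^sup>*"
    then show ?thesis
    proof (cases rule: converse_rtranclE)
      case base then show ?thesis using step.hyps(2) by blast
    next
      case (step c) then show ?thesis using fn \<open>(y,z) \<in> E\<close> by blast
    qed
  qed
qed

lemma noout: "(\<forall>y. (a, y) \<notin> R) \<Longrightarrow> (a, b) \<in> R\<^sup>* \<Longrightarrow> b = a"
  by (metis converse_rtranclE)

lemma forestD:
  assumes "forest N E"
  shows "finite N" "E \<subseteq> N \<times> N" "acyclic E" "\<forall>x y z. (x, y) \<in> E \<longrightarrow> (x, z) \<in> E \<longrightarrow> y = z"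
    "finite E" "finite (roots N E)"
proof -
  show f: "finite N" "E \<subseteq> N \<times> N" "acyclic E" "\<forall>x y z. (x, y) \<in> E \<longrightarrow> (x, z) \<in> E \<longrightarrow> y = z"
    using assms unfolding forest_def by auto
  show "finite E" using f(1,2) by (meson finite_SigmaI finite_subset)
  show "finite (roots N E)" using f(1) unfolding roots_def by simp
qed

lemma root_ex:
  assumes "forest N E" "x \<in> N"
  shows "\<exists>r \<in> roots N E. (x, r) \<in> E\<^sup>*"
proof -
  have wf: "wf (E\<inverse>)" using forestD[OF assms(1)] finite_acyclic_wf_converse by blast
  show ?thesis using assms(2)
  proof (induction x rule: wf_induct_rule[OF wf])
    case (1 x)
    show ?case
    proof (cases "\<exists>y. (x, y) \<in> E")
      case True
      then obtain y where y: "(x, y) \<in> E" by blast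
      then have "y \<in> N" using forestD(2)[OF assms(1)] by blast
      with 1 y obtain r where "r \<in> roots N E" "(y, r) \<in> E\<^sup>*" by blast
      then show ?thesis using y by (meson converse_rtrancl_into_rtrancl)
    next
      case False then show ?thesis using 1 unfolding roots_def by blast
    qed
  qed
qed

lemma root_uniq:
  assumes "forest N E" "r \<in> roots N E" "r' \<in> roots N E" "(x, r) \<in> E\<^sup>*" "(x, r') \<in> E\<^sup>*"
  shows "r = r'"
proof -
  have a: "\<forall>y. (r, y) \<notin> E" "\<forall>y. (r', y) \<notin> E" using assms(2,3) unfolding roots_def by auto
  from rt_lin[OF forestD(4)[OF assms(1)] assms(4,5)]
  show ?thesis
  proof
    assume "(r, r') \<in> E\<^sup>*" then show ?thesis using noout[OF a(1)] by metis
  next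
    assume "(r', r) \<in> E\<^sup>*" then show ?thesis using noout[OF a(2)] by metis
  qed
qed

lemma cut_path:
  assumes "(y, z) \<in> E\<^sup>*" "\<not> ((y, x) \<in> E\<^sup>* \<and> (x, z) \<in> E\<^sup>+)"
  shows "(y, z) \<in> (cut E x)\<^sup>*"
  using assms
proof (induction rule: converse_rtrancl_induct)
  case base then show ?case by simp
next
  case (step y w)
  have "y \<noteq> x"
  proof
    assume "y = x"
    then have "(x, z) \<in> E\<^sup>+" using step.hyps by (meson rtrancl_into_trancl2)
    then show False using step.prems \<open>y = x\<close> by simp
  qed
  then have "(y, w) \<in> cut E x" using step.hyps unfolding cut_def by simp
  moreover have "(w, z) \<in> (cut E x)\<^sup>*"
    using step.IH step.prems step.hyps(1) by (meson converse_rtrancl_into_rtrancl)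
  ultimately show ?case by (meson converse_rtrancl_into_rtrancl)
qed

lemma cut_sub: "(cut E x)\<^sup>* \<subseteq> E\<^sup>*"
  by (rule rtrancl_mono) (auto simp: cut_def)

lemma roots_cut: "x \<in> N \<Longrightarrow> roots N (cut E x) = insert x (roots N E)"
  unfolding roots_def cut_def by auto

lemma S1:
  assumes "forest N E"
  shows "subtree N (cut E x) x = subtree N E x"
proof -
  have that_fact: "(x, x) \<notin> E\<^sup>+" using forestD(3)[OF assms] unfolding acyclic_def by blast
  have "(y, x) \<in> (cut E x)\<^sup>* \<longleftrightarrow> (y, x) \<in> E\<^sup>*" for y
  proof
    assume "(y, x) \<in> (cut E x)\<^sup>*" then show "(y, x) \<in> E\<^sup>*" by (rule subsetD[OF cut_sub])
  next
    assume "(y, x) \<in> E\<^sup>*" then show "(y, x) \<in> (cut E x)\<^sup>*" using that_fact by (intro cut_path) auto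
  qed
  then show ?thesis unfolding subtree_def by simp
qed

lemma S2:
  assumes "forest N E" "(x, r') \<notin> E\<^sup>*"
  shows "subtree N (cut E x) r' = subtree N E r'"
proof -
  have that_fact: "(x, r') \<notin> E\<^sup>+" using assms(2) by (auto dest: trancl_into_rtrancl)
  have "(y, r') \<in> (cut E x)\<^sup>* \<longleftrightarrow> (y, r') \<in> E\<^sup>*" for y
  proof
    assume "(y, r') \<in> (cut E x)\<^sup>*" then show "(y, r') \<in> E\<^sup>*" by (rule subsetD[OF cut_sub])
  next
    assume "(y, r') \<in> E\<^sup>*" then show "(y, r') \<in> (cut E x)\<^sup>*" using that_fact by (intro cut_path) auto
  qed
  then show ?thesis unfolding subtree_def by simp
qed

lemma S3:
  assumes "forest N E" "r \<in> roots N E" "(x, r) \<in> E\<^sup>*" "x \<noteq> r"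
  shows "subtree N (cut E x) r = subtree N E r - subtree N E x"
proof (rule set_eqI)
  fix y
  have fn: "\<forall>a b c. (a, b) \<in> cut E x \<longrightarrow> (a, c) \<in> cut E x \<longrightarrow> b = c"
    using forestD(4)[OF assms(1)] unfolding cut_def by blast
  have xno: "\<forall>z. (x, z) \<notin> cut E x" unfolding cut_def by simp
  have rno: "\<forall>z. (r, z) \<notin> E" using assms(2) unfolding roots_def by simp
  have "(y, r) \<in> (cut E x)\<^sup>* \<longleftrightarrow> (y, r) \<in> E\<^sup>* \<and> (y, x) \<notin> E\<^sup>*"
  proof
    assume yr: "(y, r) \<in> (cut E x)\<^sup>*"
    have "(y, x) \<notin> E\<^sup>*"
    proof
      assume yxE: "(y, x) \<in> E\<^sup>*"
      have "(x, x) \<notin> E\<^sup>+" using forestD(3)[OF assms(1)] unfolding acyclic_def by blast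
      then have yx: "(y, x) \<in> (cut E x)\<^sup>*" using yxE by (intro cut_path) auto
      from rt_lin[OF fn yx yr] show False
      proof
        assume "(x, r) \<in> (cut E x)\<^sup>*"
        then have "r = x" by (rule noout[OF xno])
        then show False using assms(4) by simp
      next
        assume "(r, x) \<in> (cut E x)\<^sup>*"
        then have "(r, x) \<in> E\<^sup>*" by (rule subsetD[OF cut_sub])
        then have "x = r" by (rule noout[OF rno])
        then show False using assms(4) by simp
      qed
    qed
    moreover have "(y, r) \<in> E\<^sup>*" using yr by (rule subsetD[OF cut_sub])
    ultimately show "(y, r) \<in> E\<^sup>* \<and> (y, x) \<notin> E\<^sup>*" by simp
  next
    assume a: "(y, r) \<in> E\<^sup>* \<and> (y, x) \<notin> E\<^sup>*"
    then show "(y, r) \<in> (cut E x)\<^sup>*" by (intro cut_path) auto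
  qed
  then show "y \<in> subtree N (cut E x) r \<longleftrightarrow> y \<in> subtree N E r - subtree N E x"
    unfolding subtree_def by auto
qed

lemma succ_asym: "succ N E a b \<Longrightarrow> \<not> succ N E b a"
  unfolding succ_def by auto
lemma succ_total:
  assumes "a \<noteq> b" shows "succ N E a b \<or> succ N E b a"
proof (cases "P N E a = P N E b")
  case True
  have "a < b \<or> b < a" using assms by (simp add: neq_iff)
  then show ?thesis unfolding succ_def using True by auto
next
  case False
  then have "P N E a < P N E b \<or> P N E b < P N E a" by (simp add: neq_iff)
  then show ?thesis unfolding succ_def by auto
qed

lemma succ_trans: "succ N E a b \<Longrightarrow> succ N E b c \<Longrightarrow> succ N E a c"
  unfolding succ_def by auto

lemma ex_max: "finite S \<Longrightarrow> S \<noteq> {} \<Longrightarrow> \<exists>m\<in>S. \<forall>r\<in>S. r \<noteq> m \<longrightarrow> succ N E m r"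
proof (induction S rule: finite_ne_induct)
  case (singleton x) then show ?case by simp
next
  case (insert a S)
  then obtain m where m: "m \<in> S" "\<forall>r\<in>S. r \<noteq> m \<longrightarrow> succ N E m r" by blast
  have am: "a \<noteq> m" using insert.hyps m(1) by auto
  show ?case
  proof (cases "succ N E a m")
    case True
    have "\<forall>r\<in>insert a S. r \<noteq> a \<longrightarrow> succ N E a r"
    proof (intro ballI impI)
      fix r assume "r \<in> insert a S" "r \<noteq> a"
      then have "r \<in> S" by simp
      show "succ N E a r"
      proof (cases "r = m")
        case True then show ?thesis using \<open>succ N E a m\<close> by simp
      next
        case False then show ?thesis using m(2) \<open>r \<in> S\<close> \<open>succ N E a m\<close> succ_trans by blast
      qed
    qed
    then show ?thesis by blast
  next
    case False
    then have "succ N E m a" using succ_total[OF am] by blast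
    then have "\<forall>r\<in>insert a S. r \<noteq> m \<longrightarrow> succ N E m r" using m(2) by auto
    then show ?thesis using m(1) by blast
  qed
qed

lemma succ_max_eq:
  assumes "m \<in> S" "\<forall>r\<in>S. r \<noteq> m \<longrightarrow> succ N E m r"
  shows "succ_max N E S = m"
  unfolding succ_max_def
proof (rule the_equality)
  show "m \<in> S \<and> (\<forall>r'\<in>S. r' \<noteq> m \<longrightarrow> succ N E m r')" using assms by simp
next
  fix r assume r: "r \<in> S \<and> (\<forall>r'\<in>S. r' \<noteq> r \<longrightarrow> succ N E r r')"
  show "r = m"
  proof (rule ccontr)
    assume "r \<noteq> m"
    then have "succ N E r m" "succ N E m r" using r assms by auto
    then show False using succ_asym by blast
  qed
qed

lemma succ_max_prop:
  assumes "finite S" "S \<noteq> {}"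
  shows "succ_max N E S \<in> S \<and> (\<forall>r\<in>S. r \<noteq> succ_max N E S \<longrightarrow> succ N E (succ_max N E S) r)"
proof -
  obtain m where "m \<in> S" "\<forall>r\<in>S. r \<noteq> m \<longrightarrow> succ N E m r" using ex_max[OF assms, of N E] by blast
  moreover then have "succ_max N E S = m" by (rule succ_max_eq)
  ultimately show ?thesis by simp
qed

lemma subtree_sub: "subtree N E x \<subseteq> N" unfolding subtree_def by auto

lemma fin_subtree: "forest N E \<Longrightarrow> finite (subtree N E x)"
  by (rule finite_subset[OF subtree_sub forestD(1)])

lemma self_subtree: "x \<in> N \<Longrightarrow> x \<in> subtree N E x" unfolding subtree_def by auto

lemma r1_cut_iff:
  assumes "forest N E" "x \<in> N"
  shows "x \<in> A N E \<longleftrightarrow> (\<forall>r'\<in>roots N E. r' \<noteq> x \<longrightarrow> succ N (cut E x) x r')"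
proof -
  have R: "roots N (cut E x) = insert x (roots N E)" using roots_cut[OF assms(2)] .
  have fin: "finite (roots N (cut E x))" using R forestD(6)[OF assms(1)] by simp
  have ne: "roots N (cut E x) \<noteq> {}" using R by simp
  have "x \<in> A N E \<longleftrightarrow> r1 N (cut E x) = x" unfolding A_def using assms(2) by auto
  also have "\<dots> \<longleftrightarrow> (\<forall>r'\<in>roots N (cut E x). r' \<noteq> x \<longrightarrow> succ N (cut E x) x r')"
  proof
    assume "r1 N (cut E x) = x"
    then show "\<forall>r'\<in>roots N (cut E x). r' \<noteq> x \<longrightarrow> succ N (cut E x) x r'"
      using succ_max_prop[OF fin ne, of N "cut E x"] unfolding r1_def by simp
  next
    assume "\<forall>r'\<in>roots N (cut E x). r' \<noteq> x \<longrightarrow> succ N (cut E x) x r'"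
    then show "r1 N (cut E x) = x" unfolding r1_def using R by (intro succ_max_eq) auto
  qed
  finally show ?thesis using R by simp
qed

lemma r1_prop:
  assumes "forest N E" "roots N E \<noteq> {}"
  shows "r1 N E \<in> roots N E" "\<forall>r'\<in>roots N E. r' \<noteq> r1 N E \<longrightarrow> succ N E (r1 N E) r'"
  using succ_max_prop[OF forestD(6)[OF assms(1)] assms(2), of N E] unfolding r1_def by auto

lemma r2_iff:
  assumes "forest N E" "roots N E \<noteq> {}"
  shows "(\<forall>r'\<in>roots N E - {r1 N E}. succ N E x r') \<longleftrightarrow>
     (card (roots N E) \<ge> 2 \<longrightarrow> succ N E x (r2 N E))"
proof (cases "card (roots N E) \<ge> 2")
  case True
  have fin: "finite (roots N E - {r1 N E})" using forestD(6)[OF assms(1)] by simp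
  have "card (roots N E - {r1 N E}) \<ge> 1" using True r1_prop(1)[OF assms]
    by (simp add: card_Diff_singleton)
  then have ne: "roots N E - {r1 N E} \<noteq> {}" by (metis card.empty not_one_le_zero)
  note M = succ_max_prop[OF fin ne, of N E, folded r2_def]
  show ?thesis
  proof
    assume h: "\<forall>r'\<in>roots N E - {r1 N E}. succ N E x r'"
    have "r2 N E \<in> roots N E - {r1 N E}" using M by (rule conjunct1)
    then show "card (roots N E) \<ge> 2 \<longrightarrow> succ N E x (r2 N E)" using h by simp
  next
    assume "card (roots N E) \<ge> 2 \<longrightarrow> succ N E x (r2 N E)"
    then have "succ N E x (r2 N E)" using True by simp
    show "\<forall>r'\<in>roots N E - {r1 N E}. succ N E x r'"
    proof
      fix r' assume r': "r' \<in> roots N E - {r1 N E}"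
      show "succ N E x r'"
      proof (cases "r' = r2 N E")
        case True then show ?thesis using \<open>succ N E x (r2 N E)\<close> by simp
      next
        case False
        then have "succ N E (r2 N E) r'" using M r' by blast
        then show ?thesis by (rule succ_trans[OF \<open>succ N E x (r2 N E)\<close>])
      qed
    qed
  qed
next
  case False
  have fin: "finite (roots N E)" using forestD(6)[OF assms(1)] .
  have "card (roots N E) \<le> 1" using False by simp
  then have emp: "roots N E - {r1 N E} = {}" using r1_prop(1)[OF assms] fin
    using card_le_Suc0_iff_eq[OF fin] by auto
  show ?thesis using False by (simp only: emp ball_empty) simp
qed

lemma Pr1pos:
  assumes "forest N E" "r \<in> roots N E"
  shows "P N E r \<ge> 1"
proof -
  have "r \<in> N" using assms(2) unfolding roots_def by simp
  then have "r \<in> subtree N E r" by (rule self_subtree)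
  then have "subtree N E r \<noteq> {}" by blast
  then have "card (subtree N E r) \<noteq> 0" using fin_subtree[OF assms(1)] by simp
  then show ?thesis unfolding P_def by simp
qed

lemma main_root:
  assumes "forest N E" "x \<in> roots N E"
  shows "x \<in> A N E \<longleftrightarrow> x \<in> subtree N E (r1 N E) \<and>
       (real (P N E x) > real (P N E (r1 N E)) / 2 \<or>
        (real (P N E x) = real (P N E (r1 N E)) / 2 \<and> x < r1 N E)) \<and>
       (card (roots N E) \<ge> 2 \<longrightarrow> succ N E x (r2 N E))"
proof -
  have ne: "roots N E \<noteq> {}" using assms(2) by blast
  note R1 = r1_prop[OF assms(1) ne]
  have xN: "x \<in> N" using assms(2) unfolding roots_def by simp
  have rN: "\<forall>y. (x, y) \<notin> E" using assms(2) unfolding roots_def by simp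
  have cutE: "cut E x = E" using rN unfolding cut_def by auto
  have "x \<in> A N E \<longleftrightarrow> x = r1 N E" unfolding A_def using cutE xN by auto
  also have "x = r1 N E \<longleftrightarrow> x \<in> subtree N E (r1 N E)"
  proof
    assume "x = r1 N E" then show "x \<in> subtree N E (r1 N E)" using self_subtree[OF xN] by simp
  next
    assume "x \<in> subtree N E (r1 N E)"
    then have "(x, r1 N E) \<in> E\<^sup>*" unfolding subtree_def by simp
    then show "x = r1 N E" using noout[OF rN] by metis
  qed
  also have "\<dots> \<longleftrightarrow> x \<in> subtree N E (r1 N E) \<and>
       (real (P N E x) > real (P N E (r1 N E)) / 2 \<or>
        (real (P N E x) = real (P N E (r1 N E)) / 2 \<and> x < r1 N E)) \<and>
       (card (roots N E) \<ge> 2 \<longrightarrow> succ N E x (r2 N E))"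
  proof (intro iffI conjI)
    assume h: "x \<in> subtree N E (r1 N E)"
    then have "(x, r1 N E) \<in> E\<^sup>*" unfolding subtree_def by simp
    then have "r1 N E = x" by (rule noout[OF rN])
    then have xr1: "x = r1 N E" by simp
    show "x \<in> subtree N E (r1 N E)" by (rule h)
    have "P N E x \<ge> 1" using Pr1pos[OF assms] .
    then show "real (P N E x) > real (P N E (r1 N E)) / 2 \<or>
        (real (P N E x) = real (P N E (r1 N E)) / 2 \<and> x < r1 N E)" using xr1 by simp
    have "\<forall>r'\<in>roots N E - {r1 N E}. succ N E x r'" using R1(2) xr1 by simp
    then show "card (roots N E) \<ge> 2 \<longrightarrow> succ N E x (r2 N E)"
      using r2_iff[OF assms(1) ne, of x] by simp
  qed simp
  finally show ?thesis .
qed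

lemma main_nonroot:
  assumes "forest N E" "x \<in> N" "x \<notin> roots N E"
  shows "x \<in> A N E \<longleftrightarrow> x \<in> subtree N E (r1 N E) \<and>
       (real (P N E x) > real (P N E (r1 N E)) / 2 \<or>
        (real (P N E x) = real (P N E (r1 N E)) / 2 \<and> x < r1 N E)) \<and>
       (card (roots N E) \<ge> 2 \<longrightarrow> succ N E x (r2 N E))"
proof -
  obtain r where r: "r \<in> roots N E" "(x, r) \<in> E\<^sup>*" using root_ex[OF assms(1,2)] by blast
  have xr: "x \<noteq> r" using r(1) assms(3) by blast
  have ne: "roots N E \<noteq> {}" using r by blast
  note R1 = r1_prop[OF assms(1) ne]
  have rN: "\<forall>y. (r, y) \<notin> E" using r(1) unfolding roots_def by simp
  have sub_iff: "x \<in> subtree N E (r1 N E) \<longleftrightarrow> r = r1 N E"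
  proof
    assume "x \<in> subtree N E (r1 N E)"
    then have "(x, r1 N E) \<in> E\<^sup>*" unfolding subtree_def by simp
    then show "r = r1 N E" by (rule root_uniq[OF assms(1) r(1) R1(1) r(2)])
  next
    assume "r = r1 N E" then show "x \<in> subtree N E (r1 N E)" using r(2) assms(2) unfolding subtree_def by simp
  qed
  have Pcx: "P N (cut E x) x = P N E x" unfolding P_def using S1[OF assms(1)] by simp
  have subxr: "subtree N E x \<subseteq> subtree N E r"
  proof
    fix y assume "y \<in> subtree N E x"
    then have "y \<in> N" "(y, x) \<in> E\<^sup>*" unfolding subtree_def by auto
    moreover have "(y, r) \<in> E\<^sup>*" using rtrancl_trans[OF \<open>(y, x) \<in> E\<^sup>*\<close> r(2)] .
    ultimately show "y \<in> subtree N E r" unfolding subtree_def by simp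
  qed
  have Pcr: "P N (cut E x) r = P N E r - P N E x"
    unfolding P_def S3[OF assms(1) r(1) r(2) xr]
    using fin_subtree[OF assms(1)] subxr by (simp add: card_Diff_subset)
  have Pother: "P N (cut E x) r' = P N E r'" if "r' \<in> roots N E" "r' \<noteq> r" for r'
  proof -
    have "(x, r') \<notin> E\<^sup>*"
    proof
      assume "(x, r') \<in> E\<^sup>*"
      then have "r = r'" by (rule root_uniq[OF assms(1) r(1) that(1) r(2)])
      then show False using that(2) by simp
    qed
    then show ?thesis unfolding P_def using S2[OF assms(1)] by simp
  qed
  have Pxr: "P N E x < P N E r"
  proof -
    have "r \<notin> subtree N E x"
    proof
      assume "r \<in> subtree N E x"
      then have "(r, x) \<in> E\<^sup>*" unfolding subtree_def by simp
      then have "x = r" by (rule noout[OF rN])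
      then show False using xr by simp
    qed
    moreover have "r \<in> subtree N E r" using r(1) self_subtree unfolding roots_def by auto
    ultimately have "subtree N E x \<noteq> subtree N E r" by metis
    then have "subtree N E x \<subset> subtree N E r" using subxr by (simp add: psubset_eq)
    then show ?thesis unfolding P_def using fin_subtree[OF assms(1)] by (simp add: psubset_card_mono)
  qed
  have LHS: "x \<in> A N E \<longleftrightarrow> (\<forall>r'\<in>roots N E. r' \<noteq> x \<longrightarrow> succ N (cut E x) x r')"
    by (rule r1_cut_iff[OF assms(1,2)])
  show ?thesis
  proof (cases "r = r1 N E")
    case True
    have L2: "(\<forall>r'\<in>roots N E. r' \<noteq> x \<longrightarrow> succ N (cut E x) x r') \<longleftrightarrow>
       succ N (cut E x) x r \<and> (\<forall>r'\<in>roots N E - {r1 N E}. succ N E x r')"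
    proof (intro iffI conjI ballI)
      assume h: "\<forall>r'\<in>roots N E. r' \<noteq> x \<longrightarrow> succ N (cut E x) x r'"
      show "succ N (cut E x) x r" using h r(1) xr by simp
      fix r' assume r': "r' \<in> roots N E - {r1 N E}"
      then have r'x: "r' \<noteq> x" "r' \<in> roots N E" "r' \<noteq> r" using assms(3) True by auto
      have "succ N (cut E x) x r'" using h r'x(1,2) by simp
      then show "succ N E x r'" using Pother[OF r'x(2,3)] Pcx unfolding succ_def by simp
    next
      fix r' assume h: "succ N (cut E x) x r \<and> (\<forall>r'\<in>roots N E - {r1 N E}. succ N E x r')"
        and r': "r' \<in> roots N E"
      show "r' \<noteq> x \<longrightarrow> succ N (cut E x) x r'"
      proof (cases "r' = r")
        case True then show ?thesis using h by simp
      next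
        case False
        then have "succ N E x r'" using h r' \<open>r = r1 N E\<close> by simp
        then show ?thesis using Pother[OF r' False] Pcx unfolding succ_def by simp
      qed
    qed
    have L3: "succ N (cut E x) x r \<longleftrightarrow>
       (real (P N E x) > real (P N E (r1 N E)) / 2 \<or>
        (real (P N E x) = real (P N E (r1 N E)) / 2 \<and> x < r1 N E))"
    proof -
      have lt: "P N E x < P N E (r1 N E)" using Pxr True by simp
      have h1: "(P N E (r1 N E) - P N E x < P N E x) \<longleftrightarrow> (P N E (r1 N E) < 2 * P N E x)" using lt by arith
      have h2: "(P N E x = P N E (r1 N E) - P N E x) \<longleftrightarrow> (P N E (r1 N E) = 2 * P N E x)" using lt by arith
      have h3: "(real (P N E (r1 N E)) / 2 < real (P N E x)) \<longleftrightarrow> (P N E (r1 N E) < 2 * P N E x)"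
      proof -
        have "(real (P N E (r1 N E)) / 2 < real (P N E x)) \<longleftrightarrow> real (P N E (r1 N E)) < real (2 * P N E x)" by (simp add: mult.commute)
        also have "\<dots> \<longleftrightarrow> (P N E (r1 N E) < 2 * P N E x)" by (rule of_nat_less_iff)
        finally show ?thesis .
      qed
      have h4: "(real (P N E x) = real (P N E (r1 N E)) / 2) \<longleftrightarrow> (P N E (r1 N E) = 2 * P N E x)"
      proof -
        have "(real (P N E x) = real (P N E (r1 N E)) / 2) \<longleftrightarrow> real (P N E (r1 N E)) = real (2 * P N E x)" by (auto simp: mult.commute)
        also have "\<dots> \<longleftrightarrow> (P N E (r1 N E) = 2 * P N E x)" by (rule of_nat_eq_iff)
        finally show ?thesis .
      qed
      show ?thesis unfolding succ_def Pcx Pcr unfolding True h1 h2 h3 h4 by (rule refl)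
    qed
    have L4: "(\<forall>r'\<in>roots N E - {r1 N E}. succ N E x r') \<longleftrightarrow> (card (roots N E) \<ge> 2 \<longrightarrow> succ N E x (r2 N E))"
      by (rule r2_iff[OF assms(1) ne])
    show ?thesis unfolding LHS L2 L3 L4 using sub_iff True by simp
  next
    case False
    have r1r: "succ N E (r1 N E) r" using R1(2) r(1) False by simp
    have "\<not> succ N (cut E x) x (r1 N E)"
      using Pother[OF R1(1)] False r1r Pxr Pcx unfolding succ_def by auto
    moreover have "r1 N E \<noteq> x" using R1(1) assms(3) by metis
    ultimately have "x \<notin> A N E" unfolding LHS using R1(1) by metis
    then show ?thesis using sub_iff False by simp
  qed
qed

theorem claim2:
  fixes N :: "'a::linorder set" and E :: "('a \<times> 'a) set"
  assumes "forest N E"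
  shows "A N E =
    {x \<in> subtree N E (r1 N E).
       (real (P N E x) > real (P N E (r1 N E)) / 2 \<or>
        (real (P N E x) = real (P N E (r1 N E)) / 2 \<and> x < r1 N E)) \<and>
       (card (roots N E) \<ge> 2 \<longrightarrow>
        (P N E x > P N E (r2 N E) \<or> (P N E x = P N E (r2 N E) \<and> x < r2 N E)))}"
proof (rule set_eqI)
  fix x
  have eq: "(P N E x > P N E (r2 N E) \<or> (P N E x = P N E (r2 N E) \<and> x < r2 N E)) = succ N E x (r2 N E)"
    unfolding succ_def by (rule refl)
  have main: "x \<in> A N E \<longleftrightarrow> x \<in> subtree N E (r1 N E) \<and>
       (real (P N E x) > real (P N E (r1 N E)) / 2 \<or>
        (real (P N E x) = real (P N E (r1 N E)) / 2 \<and> x < r1 N E)) \<and>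
       (card (roots N E) \<ge> 2 \<longrightarrow> succ N E x (r2 N E))"
  proof (cases "x \<in> N")
    case False
    have "x \<notin> A N E" using False unfolding A_def by simp
    moreover have "x \<notin> subtree N E (r1 N E)"
    proof
      assume "x \<in> subtree N E (r1 N E)"
      then have "x \<in> N" by (rule subsetD[OF subtree_sub])
      then show False using False by simp
    qed
    ultimately show ?thesis by simp
  next
    case True
    show ?thesis
    proof (cases "x \<in> roots N E")
      case True then show ?thesis by (rule main_root[OF assms])
    next
      case False then show ?thesis by (rule main_nonroot[OF assms \<open>x \<in> N\<close>])
    qed
  qed
  show "x \<in> A N E \<longleftrightarrow> x \<in> {x \<in> subtree N E (r1 N E).
       (real (P N E x) > real (P N E (r1 N E)) / 2 \<or>
        (real (P N E x) = real (P N E (r1 N E)) / 2 \<and> x < r1 N E)) \<and>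
       (card (roots N E) \<ge> 2 \<longrightarrow>
        (P N E x > P N E (r2 N E) \<or> (P N E x = P N E (r2 N E) \<and> x < r2 N E)))}"
    unfolding mem_Collect_eq eq by (rule main)
qed

end
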